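(* Every code $C\subseteq[5]^7$ with $|C|=14$ and minimum Hamming distance at least $6$ can be extended to such a code of size $15$: there exists $u\in[5]^7$ such that $C\cup\{u\}$ has $15$ elements and minimum Hamming distance at least $6$.
   Context: $[5]=\{0,1,2,3,4\}$. The Hamming distance between two words of $[5]^7$ is the number of coordinates in which they differ; the minimum distance of a code is the minimum Hamming distance between distinct codewords. *)

theory Defs
  imports Main
begin

text \<open>Words of [5]^7 are lists of naturals of length 7 with entries in {0..4}.\<close>
definition words :: "nat \<Rightarrow> nat \<Rightarrow> nat list set" where
  "words q n = {w. length w = n \<and> set w \<subseteq> {0..<q}}"

definition hamming :: "nat list \<Rightarrow> nat list \<Rightarrow> nat" where
  "hamming u v = card {i. i < length u \<and> u ! i \<noteq> v ! i}"

definition min_dist_ge :: "nat list set \<Rightarrow> nat \<Rightarrow> bool" where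
  "min_dist_ge C d \<longleftrightarrow> (\<forall>u\<in>C. \<forall>v\<in>C. u \<noteq> v \<longrightarrow> d \<le> hamming u v)"

end

theory Submission
  imports Defs
begin

lemma card_filter_sum: "finite A \<Longrightarrow> card {x\<in>A. P x} = (\<Sum>x\<in>A. if P x then 1 else 0)"
  by (simp add: sum.inter_filter[symmetric])

lemma card_split7: "card {k. k < (7::nat) \<and> P k} + card {k. k < 7 \<and> \<not> P k} = 7"
proof -
  have "{k. k < (7::nat) \<and> P k} \<union> {k. k < 7 \<and> \<not> P k} = {..<7}" by auto
  moreover have "card ({k. k < (7::nat) \<and> P k} \<union> {k. k < 7 \<and> \<not> P k}) =
     card {k. k < (7::nat) \<and> P k} + card {k. k < 7 \<and> \<not> P k}"
    by (rule card_Un_disjoint) auto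
  ultimately show ?thesis by simp
qed

lemma quad1: "(s::nat)*(s-1) + 6 \<ge> 4*s"
proof (cases "s \<le> 3")
  case True then show ?thesis by (cases s; cases "s-1"; cases "s-2"; auto)
next
  case False
  then have "s*(s-1) \<ge> 4*(s-1)" by (intro mult_le_mono) auto
  then show ?thesis using False by linarith
qed

lemma quad2: "s \<noteq> 2 \<Longrightarrow> s \<noteq> 3 \<Longrightarrow> (s::nat)*(s-1) + 6 \<ge> 4*s + 2"
proof (cases "s \<le> 3")
  case True then show "s \<noteq> 2 \<Longrightarrow> s \<noteq> 3 \<Longrightarrow> ?thesis" by (cases s; cases "s-1"; auto)
next
  case False
  then have "s*(s-1) \<ge> 4*(s-1)" by (intro mult_le_mono) auto
  then show ?thesis using False by linarith
qed

lemma sum_sq_bound: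
  fixes f :: "nat \<Rightarrow> nat"
  assumes "(\<Sum>v<5. f v) = 14"
  shows "(\<Sum>v<5. f v * (f v - 1)) \<ge> 26"
    and "(\<Sum>v<5. f v * (f v - 1)) = 26 \<Longrightarrow> v < 5 \<Longrightarrow> f v = 2 \<or> f v = 3"
proof -
  have "(\<Sum>v<5. 4 * f v) \<le> (\<Sum>v<5. f v * (f v - 1) + 6)"
    by (rule sum_mono) (rule quad1)
  then have A: "56 \<le> (\<Sum>v<5. f v * (f v - 1)) + 30"
    using assms by (simp add: sum.distrib sum_distrib_left[symmetric])
  then show "(\<Sum>v<5. f v * (f v - 1)) \<ge> 26" by linarith
  assume eq: "(\<Sum>v<5. f v * (f v - 1)) = 26" and v: "v < 5"
  show "f v = 2 \<or> f v = 3"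
  proof (rule ccontr)
    assume n: "\<not> (f v = 2 \<or> f v = 3)"
    have fin: "finite {..<5::nat}" by simp
    have "(\<Sum>w<5. 4 * f w) = 4 * f v + (\<Sum>w\<in>{..<5} - {v}. 4 * f w)"
      using v by (subst sum.remove[OF fin, of v]) auto
    also have "\<dots> + 2 \<le> (f v * (f v - 1) + 6) + (\<Sum>w\<in>{..<5} - {v}. f w * (f w - 1) + 6)"
    proof -
      have "4 * f v + 2 \<le> f v * (f v - 1) + 6" using quad2[of "f v"] n by auto
      moreover have "(\<Sum>w\<in>{..<5} - {v}. 4 * f w) \<le> (\<Sum>w\<in>{..<5} - {v}. f w * (f w - 1) + 6)"
        by (intro sum_mono quad1)
      ultimately show ?thesis by linarith
    qed
    also have "\<dots> = (\<Sum>w<5. f w * (f w - 1) + 6)"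
      using v by (subst sum.remove[OF fin, of v]) auto
    finally have "56 + 2 \<le> (\<Sum>v<5. f v * (f v - 1)) + 30"
      using assms by (simp add: sum.distrib sum_distrib_left[symmetric])
    then show False using eq by simp
  qed
qed

lemma sum_eq_upper:
  fixes f :: "'a \<Rightarrow> nat"
  assumes "finite A" "\<forall>x\<in>A. f x \<le> b" "sum f A \<ge> card A * b" "x \<in> A"
  shows "f x = b"
proof (rule ccontr)
  assume "f x \<noteq> b"
  then have "f x < b" using assms by auto
  have "sum f A = f x + sum f (A - {x})" using assms by (simp add: sum.remove)
  also have "sum f (A - {x}) \<le> (\<Sum>y\<in>A-{x}. b)" using assms by (intro sum_mono) auto
  finally have "sum f A < b + card (A - {x}) * b" using \<open>f x < b\<close> by simp
  also have "\<dots> = card A * b"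
  proof -
    have cA: "card A = Suc (card (A - {x}))" by (rule card_Suc_Diff1[symmetric]) (use assms in auto)
    show ?thesis by (simp add: cA)
  qed
  finally show False using assms by simp
qed

lemma sum_eq_lower:
  fixes f :: "'a \<Rightarrow> nat"
  assumes "finite A" "\<forall>x\<in>A. f x \<ge> b" "sum f A \<le> card A * b" "x \<in> A"
  shows "f x = b"
proof (rule ccontr)
  assume "f x \<noteq> b"
  then have fx: "f x > b" using assms by auto
  have S: "sum f A = f x + sum f (A - {x})" using assms by (simp add: sum.remove)
  have R: "sum f (A - {x}) \<ge> (\<Sum>y\<in>A-{x}. b)" using assms by (intro sum_mono) auto
  have cA: "card A = Suc (card (A - {x}))" by (rule card_Suc_Diff1[symmetric]) (use assms in auto)
  have "sum f A > b + card (A - {x}) * b" using S R fx by simp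
  then have "sum f A > card A * b" by (simp add: cA)
  then show False using assms by simp
qed

lemma agree_le1:
  assumes "length c = 7" "length d = 7" "6 \<le> hamming c d"
  shows "card {k. k < 7 \<and> c ! k = d ! k} \<le> 1"
proof -
  have "hamming c d = card {k. k < 7 \<and> \<not> c ! k = d ! k}"
    using assms unfolding hamming_def by simp
  then show ?thesis using card_split7[of "\<lambda>k. c ! k = d ! k"] assms by linarith
qed

lemma ham_ge6:
  assumes "length c = 7" "length d = 7" "card {k. k < 7 \<and> c ! k = d ! k} \<le> 1"
  shows "6 \<le> hamming c d"
proof -
  have "hamming c d = card {k. k < 7 \<and> \<not> c ! k = d ! k}"
    using assms unfolding hamming_def by simp
  then show ?thesis using card_split7[of "\<lambda>k. c ! k = d ! k"] assms by linarith
qed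

theorem proposition5p7:
  assumes "C \<subseteq> words 5 7" and "card C = 14" and "min_dist_ge C 6"
  shows "\<exists>u\<in>words 5 7. card (insert u C) = 15 \<and> min_dist_ge (insert u C) 6"
proof -
  have finC: "finite C" using assms(2) by (metis card_ge_0_finite zero_less_numeral)
  have len: "\<And>c. c \<in> C \<Longrightarrow> length c = 7" using assms(1) unfolding words_def by auto
  have rng: "c ! i < 5" if "c \<in> C" "i < 7" for c i
  proof -
    have "c ! i \<in> set c" using that len[OF that(1)] by simp
    moreover have "set c \<subseteq> {0..<5}" using assms(1) that(1) unfolding words_def by auto
    ultimately show ?thesis by auto
  qed
  have agr: "\<And>c d. c \<in> C \<Longrightarrow> d \<in> C \<Longrightarrow> c \<noteq> d \<Longrightarrow> card {k. k < 7 \<and> c ! k = d ! k} \<le> 1"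
    using assms(3) len agree_le1 unfolding min_dist_ge_def by blast
  define s where "s i v = card {d\<in>C. d ! i = v}" for i v :: nat
  define g where "g c = (\<Sum>i<7. s i (c ! i) - 1)" for c
  define T where "T i = (\<Sum>c\<in>C. s i (c ! i) - 1)" for i
  have g13: "g c \<le> 13" if c: "c \<in> C" for c
  proof -
    have eq: "s i (c ! i) - 1 = (\<Sum>d\<in>C - {c}. if d ! i = c ! i then 1 else 0)" for i
    proof -
      have "{d\<in>C - {c}. d ! i = c ! i} = {d\<in>C. d ! i = c ! i} - {c}" by auto
      then have "card {d\<in>C - {c}. d ! i = c ! i} = s i (c ! i) - 1"
        using c finC unfolding s_def by (simp add: card_Diff_singleton)
      moreover have "card {d\<in>C - {c}. d ! i = c ! i} = (\<Sum>d\<in>C - {c}. if d ! i = c ! i then 1 else 0)"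
        using finC by (intro card_filter_sum) simp
      ultimately show ?thesis by simp
    qed
    have "g c = (\<Sum>i<7. \<Sum>d\<in>C - {c}. if d ! i = c ! i then 1 else 0)"
      unfolding g_def by (rule sum.cong[OF refl eq])
    also have "\<dots> = (\<Sum>d\<in>C - {c}. \<Sum>i<7. if d ! i = c ! i then 1 else 0)"
      by (rule sum.swap)
    also have "\<dots> \<le> (\<Sum>d\<in>C - {c}. 1)"
    proof (rule sum_mono)
      fix d assume d: "d \<in> C - {c}"
      have "(\<Sum>i<7. if d ! i = c ! i then 1 else 0) = card {k\<in>{..<7}. d ! k = c ! k}"
        by (rule card_filter_sum[symmetric]) simp
      also have "{k\<in>{..<7::nat}. d ! k = c ! k} = {k. k < 7 \<and> d ! k = c ! k}" by auto
      finally show "(\<Sum>i<7. if d ! i = c ! i then 1 else 0) \<le> (1::nat)"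
        using agr[of d c] d c by auto
    qed
    also have "\<dots> = 13" using c finC assms(2) by (simp add: card_Diff_singleton)
    finally show ?thesis .
  qed
  have sumgT: "(\<Sum>c\<in>C. g c) = (\<Sum>i<7. T i)"
    unfolding g_def T_def by (rule sum.swap)
  have s14: "(\<Sum>v<5. s i v) = 14" if "i < 7" for i
  proof -
    have "(\<Sum>v<5. s i v) = (\<Sum>v\<in>{..<5}. sum (\<lambda>_. 1::nat) {x\<in>C. x ! i = v})"
      unfolding s_def by simp
    also have "\<dots> = sum (\<lambda>_. 1::nat) C"
      by (rule sum.group) (use finC rng that in auto)
    finally show ?thesis using assms(2) by simp
  qed
  have Tform: "T i = (\<Sum>v<5. s i v * (s i v - 1))" if "i < 7" for i
  proof -
    have "T i = (\<Sum>v\<in>{..<5}. sum (\<lambda>c. s i (c ! i) - 1) {x\<in>C. x ! i = v})"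
      unfolding T_def by (rule sum.group[symmetric]) (use finC rng that in auto)
    also have "\<dots> = (\<Sum>v<5. s i v * (s i v - 1))"
    proof (rule sum.cong[OF refl])
      fix v
      have "sum (\<lambda>c. s i (c ! i) - 1) {x\<in>C. x ! i = v} = sum (\<lambda>c. s i v - 1) {x\<in>C. x ! i = v}"
        by (rule sum.cong) auto
      then show "sum (\<lambda>c. s i (c ! i) - 1) {x\<in>C. x ! i = v} = s i v * (s i v - 1)"
        unfolding s_def by simp
    qed
    finally show ?thesis .
  qed
  have T26: "T i \<ge> 26" if "i < 7" for i
    using Tform[OF that] sum_sq_bound(1)[OF s14[OF that]] by simp
  have sumT: "(\<Sum>i<7. T i) \<le> 182"
  proof -
    have "(\<Sum>c\<in>C. g c) \<le> (\<Sum>c\<in>C. 13)" using g13 by (intro sum_mono) auto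
    then show ?thesis using sumgT assms(2) by simp
  qed
  have Teq: "T i = 26" if "i < 7" for i
    by (rule sum_eq_lower[where A="{..<7}" and f=T and b=26]) (use T26 sumT that in auto)
  have s23: "s i v = 2 \<or> s i v = 3" if "i < 7" "v < 5" for i v
    using sum_sq_bound(2)[OF s14[OF that(1)]] Tform[OF that(1)] Teq[OF that(1)] that(2) by simp
  have gEq: "g c = 13" if "c \<in> C" for c
  proof (rule sum_eq_upper[where A=C and f=g and b=13])
    have "(\<Sum>i<7. T i) \<ge> (\<Sum>i<(7::nat). 26)" using T26 by (intro sum_mono) auto
    then show "card C * 13 \<le> sum g C" using sumgT assms(2) by simp
  qed (use finC g13 that in auto)
  have ex2: "\<exists>v<5. s i v = 2" if "i < 7" for i
  proof (rule ccontr)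
    assume "\<not> ?thesis"
    then have "\<forall>v<5. s i v = 3" using s23[OF that] by blast
    then have "(\<Sum>v<5. s i v) = (\<Sum>v<(5::nat). 3)" by (intro sum.cong) auto
    then show False using s14[OF that] by simp
  qed
  define u where "u = map (\<lambda>i. SOME v. v < 5 \<and> s i v = 2) [0..<7]"
  have ulen: "length u = 7" unfolding u_def by simp
  have uprop: "u ! i < 5 \<and> s i (u ! i) = 2" if "i < 7" for i
    unfolding u_def using that someI_ex[OF ex2[OF that]] by simp
  have uw: "u \<in> words 5 7" unfolding words_def
    using uprop ulen by (auto simp: in_set_conv_nth)
  have uagr: "card {k. k < 7 \<and> c ! k = u ! k} \<le> 1" if c: "c \<in> C" for c
  proof -
    have "i = j" if ij: "i \<in> {k. k < 7 \<and> c ! k = u ! k}" "j \<in> {k. k < 7 \<and> c ! k = u ! k}" for i j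
    proof (rule ccontr)
      assume ne: "i \<noteq> j"
      define t where "t k = s k (c ! k) - 1" for k
      have t2: "t k \<le> 2" if "k < 7" for k using s23[OF that rng[OF c that]] unfolding t_def by auto
      have ti: "t i = 1" "t j = 1" using ij uprop unfolding t_def by auto
      have fin: "finite {..<7::nat}" by simp
      have G: "g c = t i + (t j + (\<Sum>k\<in>{..<7} - {i} - {j}. t k))"
        unfolding g_def t_def[symmetric] using ij ne
        by (subst sum.remove[OF fin, of i], simp, subst sum.remove[of _ j], auto)
      have R: "(\<Sum>k\<in>{..<7} - {i} - {j}. t k) \<le> (\<Sum>k\<in>{..<7} - {i} - {j}. 2)"
        using t2 by (intro sum_mono) auto
      have cd: "card ({..<7::nat} - {i} - {j}) = 5" using ij ne by (simp add: card_Diff_singleton)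
      have "g c \<le> 12" using G R cd ti by simp
      then show False using gEq[OF c] by simp
    qed
    moreover have "finite {k. k < (7::nat) \<and> c ! k = u ! k}" by simp
    ultimately have "card {k. k < (7::nat) \<and> c ! k = u ! k} \<le> Suc 0"
      by (subst card_le_Suc0_iff_eq) blast+
    then show ?thesis by simp
  qed
  have unC: "u \<notin> C"
  proof
    assume "u \<in> C"
    from uagr[OF this] have "card {k. k < (7::nat)} \<le> 1" by simp
    then show False by simp
  qed
  have hu: "6 \<le> hamming u c" "6 \<le> hamming c u" if "c \<in> C" for c
  proof -
    have e: "{k. k < 7 \<and> u ! k = c ! k} = {k. k < 7 \<and> c ! k = u ! k}" by auto
    show "6 \<le> hamming c u" by (rule ham_ge6) (use len that ulen uagr in auto)
    show "6 \<le> hamming u c" by (rule ham_ge6) (use len that ulen uagr e in auto)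
  qed
  show ?thesis
  proof (intro bexI conjI)
    show "card (insert u C) = 15" using unC finC assms(2) by simp
    show "min_dist_ge (insert u C) 6"
      using assms(3) hu unfolding min_dist_ge_def by auto
  qed (rule uw)
qed

end
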